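(* There is an absolute constant $C>0$ such that if $H_1=(V,\mathcal{E}_1)$ and $H_2=(V,\mathcal{E}_2)$ are tri-hypergraphs on the same ground set, each of VC-dimension at most $d$ with $d\geq1$, then the intersection tri-hypergraph $H_1\cap H_2$ has VC-dimension at most $Cd$.
   Context: A tri-hypergraph is a pair $H=(V,\mathcal{E})$ where $V$ is a finite set and $\mathcal{E}$ is a collection of ordered partitions $(B,R,W)$ of $V$ into three (possibly empty) parts (tri-edges). $X\subseteq V$ is shattered if for every $Y\subseteq X$ there is a tri-edge with $X\cap B=X\cap(B\cup R)=Y$; the VC-dimension is the largest size of a shattered set. For tri-edges $e_1=(B_1,R_1,W_1)$, $e_2=(B_2,R_2,W_2)$, $e_1\cap e_2=(B,R,W)$ with $B=B_1\cap B_2$, $R=((B_1\cup R_1)\cap(B_2\cup R_2))\setminus B$ and $W=V\setminus(B\cup R)$. $H_1\cap H_2=(V,\{e_1\cap e_2:e_1\in\mathcal{E}_1,e_2\in\mathcal{E}_2\})$. *)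

theory Defs
  imports Complex_Main
begin

type_synonym 'a triedge = "'a set \<times> 'a set \<times> 'a set"

definition tri_hypergraph :: "'a set \<Rightarrow> 'a triedge set \<Rightarrow> bool" where
  "tri_hypergraph V E \<longleftrightarrow> finite V \<and>
     (\<forall>(B, R, W) \<in> E. B \<union> R \<union> W = V \<and> B \<inter> R = {} \<and> B \<inter> W = {} \<and> R \<inter> W = {})"

definition tri_shattered :: "'a set \<Rightarrow> 'a triedge set \<Rightarrow> 'a set \<Rightarrow> bool" where
  "tri_shattered V E X \<longleftrightarrow> X \<subseteq> V \<and>
     (\<forall>Y. Y \<subseteq> X \<longrightarrow> (\<exists>(B, R, W) \<in> E. X \<inter> B = Y \<and> X \<inter> (B \<union> R) = Y))"

(* largest size of a shattered set; 0 if no set is shattered (only when E = {}) *)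
definition tri_vc_dim :: "'a set \<Rightarrow> 'a triedge set \<Rightarrow> nat" where
  "tri_vc_dim V E = Max ({card X | X. tri_shattered V E X} \<union> {0})"

definition triedge_inter :: "'a set \<Rightarrow> 'a triedge \<Rightarrow> 'a triedge \<Rightarrow> 'a triedge" where
  "triedge_inter V e1 e2 = (case e1 of (B1, R1, W1) \<Rightarrow> case e2 of (B2, R2, W2) \<Rightarrow>
     (let B = B1 \<inter> B2; R = ((B1 \<union> R1) \<inter> (B2 \<union> R2)) - B in (B, R, V - (B \<union> R))))"

definition tri_inter :: "'a set \<Rightarrow> 'a triedge set \<Rightarrow> 'a triedge set \<Rightarrow> 'a triedge set" where
  "tri_inter V E1 E2 = {triedge_inter V e1 e2 | e1 e2. e1 \<in> E1 \<and> e2 \<in> E2}"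

end

theory Submission imports Defs begin

definition shat :: "'a set set \<Rightarrow> 'a set \<Rightarrow> bool" where
  "shat F A \<longleftrightarrow> (\<forall>Y. Y \<subseteq> A \<longrightarrow> (\<exists>S\<in>F. A \<inter> S = Y))"

lemma pajor:
  assumes "finite Z"
  shows "F \<subseteq> Pow Z \<Longrightarrow> card F \<le> card {A. A \<subseteq> Z \<and> shat F A}"
  using assms
proof (induction Z arbitrary: F rule: finite_induct)
  case empty
  then have "F \<subseteq> {{}}" by auto
  then have "card F \<le> 1" using card_mono[of "{{}}" F] by auto
  moreover have "F \<noteq> {} \<Longrightarrow> {A. A \<subseteq> {} \<and> shat F A} = {{}}"
    by (auto simp: shat_def)
  ultimately show ?case by (cases "F = {}") auto
next
  case (insert x Z0)
  define F0 where "F0 = (\<lambda>S. S - {x}) ` F"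
  define F1 where "F1 = {S \<in> Pow Z0. S \<in> F \<and> insert x S \<in> F}"
  define G1 where "G1 = {S \<in> F. x \<notin> S \<or> S - {x} \<notin> F}"
  have finF: "finite F" using insert finite_subset[of F "Pow (insert x Z0)"] by auto
  have F0sub: "F0 \<subseteq> Pow Z0" using insert.prems by (auto simp: F0_def)
  have F1sub: "F1 \<subseteq> Pow Z0" by (auto simp: F1_def)
  have "inj_on (\<lambda>S. S - {x}) G1"
  proof (rule inj_onI)
    fix S S' assume a: "S \<in> G1" "S' \<in> G1" "S - {x} = S' - {x}"
    show "S = S'"
    proof (rule ccontr)
      assume "S \<noteq> S'"
      then have "(x \<in> S \<and> x \<notin> S') \<or> (x \<in> S' \<and> x \<notin> S)" using a(3) by blast
      then show False
      proof
        assume "x \<in> S \<and> x \<notin> S'"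
        then have "S' = S - {x}" using a(3) by auto
        then show False using a(1,2) \<open>x \<in> S \<and> x \<notin> S'\<close> by (auto simp: G1_def)
      next
        assume "x \<in> S' \<and> x \<notin> S"
        then have "S = S' - {x}" using a(3) by auto
        then show False using a(1,2) \<open>x \<in> S' \<and> x \<notin> S\<close> by (auto simp: G1_def)
      qed
    qed
  qed
  moreover have "(\<lambda>S. S - {x}) ` G1 \<subseteq> F0" by (auto simp: F0_def G1_def)
  ultimately have c1: "card G1 \<le> card F0"
    using card_inj_on_le[of "\<lambda>S. S - {x}" G1 F0] F0sub insert.hyps(1)
    by (simp add: finite_subset)
  have "F - G1 \<subseteq> insert x ` F1"
  proof
    fix S assume "S \<in> F - G1"
    then have "x \<in> S" "S - {x} \<in> F" "S \<in> F" by (auto simp: G1_def)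
    moreover have "S - {x} \<subseteq> Z0" using \<open>S \<in> F\<close> insert.prems by auto
    ultimately have F1S: "S - {x} \<in> F1" unfolding F1_def Pow_iff mem_Collect_eq by (metis insert_Diff)
    have e: "S = insert x (S - {x})" using \<open>x \<in> S\<close> by blast
    show "S \<in> insert x ` F1" using F1S e by (rule rev_image_eqI)
  qed
  moreover have "finite F1" using F1sub insert.hyps(1) by (simp add: finite_subset)
  ultimately have "card (F - G1) \<le> card (insert x ` F1)" by (intro card_mono) auto
  also have "\<dots> \<le> card F1" by (rule card_image_le) fact
  finally have c2: "card (F - G1) \<le> card F1" .
  have "card F \<le> card G1 + card (F - G1)"
  proof -
    have "card F = card (G1 \<union> (F - G1))" by (rule arg_cong[where f=card]) (auto simp: G1_def)
    then show ?thesis using card_Un_le[of G1 "F - G1"] by linarith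
  qed
  then have cF: "card F \<le> card F0 + card F1" using c1 c2 by linarith
  define Sh0 where "Sh0 = {A. A \<subseteq> Z0 \<and> shat F0 A}"
  define Sh1 where "Sh1 = {A. A \<subseteq> Z0 \<and> shat F1 A}"
  define Sh where "Sh = {A. A \<subseteq> insert x Z0 \<and> shat F A}"
  have s0: "Sh0 \<subseteq> Sh"
  proof
    fix A assume "A \<in> Sh0"
    then have A: "A \<subseteq> Z0" "shat F0 A" by (auto simp: Sh0_def)
    have "shat F A" unfolding shat_def
    proof (intro allI impI)
      fix Y assume "Y \<subseteq> A"
      then obtain S where "S \<in> F0" "A \<inter> S = Y" using A(2) unfolding shat_def by blast
      then obtain T where "T \<in> F" "S = T - {x}" by (auto simp: F0_def)
      moreover have "x \<notin> A" using A insert.hyps by auto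
      ultimately show "\<exists>S\<in>F. A \<inter> S = Y" using \<open>A \<inter> S = Y\<close> by (intro bexI[of _ T]) auto
    qed
    then show "A \<in> Sh" using A by (auto simp: Sh_def)
  qed
  have s1: "insert x ` Sh1 \<subseteq> Sh"
  proof
    fix A' assume "A' \<in> insert x ` Sh1"
    then obtain A where A: "A \<subseteq> Z0" "shat F1 A" "A' = insert x A" by (auto simp: Sh1_def)
    have "shat F (insert x A)" unfolding shat_def
    proof (intro allI impI)
      fix Y assume Y: "Y \<subseteq> insert x A"
      have "Y - {x} \<subseteq> A" using Y by blast
      then obtain S where S: "S \<in> F1" "A \<inter> S = Y - {x}" using A(2) unfolding shat_def by blast
      have xS: "x \<notin> S" using S(1) insert.hyps by (auto simp: F1_def)
      show "\<exists>S\<in>F. insert x A \<inter> S = Y"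
      proof (cases "x \<in> Y")
        case True
        have "insert x S \<in> F" using S(1) by (simp add: F1_def)
        moreover have "insert x A \<inter> insert x S = Y" using S(2) xS Y True by blast
        ultimately show ?thesis by blast
      next
        case False
        have "S \<in> F" using S(1) by (simp add: F1_def)
        moreover have "insert x A \<inter> S = Y" using S(2) xS Y False by blast
        ultimately show ?thesis by blast
      qed
    qed
    then show "A' \<in> Sh" using A by (auto simp: Sh_def)
  qed
  have disj: "Sh0 \<inter> insert x ` Sh1 = {}" using insert.hyps by (auto simp: Sh0_def)
  have finSh: "finite Sh" unfolding Sh_def using insert.hyps by (auto intro: finite_subset[of _ "Pow (insert x Z0)"])
  have "card Sh0 + card (insert x ` Sh1) = card (Sh0 \<union> insert x ` Sh1)"
    using disj finSh s0 s1 by (intro card_Un_disjoint[symmetric]) (auto intro: finite_subset)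
  also have "\<dots> \<le> card Sh" using s0 s1 finSh by (intro card_mono) auto
  finally have "card Sh0 + card (insert x ` Sh1) \<le> card Sh" .
  moreover have "card (insert x ` Sh1) = card Sh1"
    by (rule card_image) (use insert.hyps in \<open>auto simp: Sh1_def inj_on_def\<close>)
  moreover have "card F0 \<le> card Sh0" using insert.IH[OF F0sub] by (simp add: Sh0_def)
  moreover have "card F1 \<le> card Sh1" using insert.IH[OF F1sub] by (simp add: Sh1_def)
  ultimately show ?case using cF by (simp add: Sh_def)
qed

lemma sum_pow_card:
  assumes "finite A"
  shows "(\<Sum>X\<in>Pow A. (t::real) ^ card X) = (1 + t) ^ card A"
proof -
  have "(\<Prod>x\<in>A. t + 1) = (\<Sum>X\<in>Pow A. (\<Prod>x\<in>X. t) * (\<Prod>x\<in>A-X. 1))"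
    by (rule prod_add) fact
  then show ?thesis by (simp add: add.commute)
qed

lemma small_count:
  assumes "finite Z"
  shows "real (card {A. A \<subseteq> Z \<and> card A \<le> d}) \<le> 5 ^ d * (6/5) ^ card Z"
proof -
  have "real (card {A. A \<subseteq> Z \<and> card A \<le> d}) = (\<Sum>A\<in>{A. A \<subseteq> Z \<and> card A \<le> d}. 1)"
    by simp
  also have "\<dots> \<le> (\<Sum>A\<in>{A. A \<subseteq> Z \<and> card A \<le> d}. (5::real) ^ d * (1/5) ^ card A)"
  proof (rule sum_mono)
    fix A assume "A \<in> {A. A \<subseteq> Z \<and> card A \<le> d}"
    then have "card A \<le> d" by simp
    then have "(5::real) ^ card A \<le> 5 ^ d" by (rule power_increasing) simp
    then show "1 \<le> (5::real) ^ d * (1/5) ^ card A"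
      by (simp add: power_divide field_simps)
  qed
  also have "\<dots> \<le> (\<Sum>A\<in>Pow Z. (5::real) ^ d * (1/5) ^ card A)"
    using assms by (intro sum_mono2) auto
  also have "\<dots> = 5 ^ d * (\<Sum>A\<in>Pow Z. (1/5::real) ^ card A)"
    by (simp add: sum_distrib_left)
  also have "\<dots> = 5 ^ d * (6/5) ^ card Z"
    using sum_pow_card[OF assms, of "1/5"] by simp
  finally show ?thesis .
qed

lemma vc_le:
  assumes "finite V" "tri_shattered V E A"
  shows "card A \<le> tri_vc_dim V E"
proof -
  have "{card X | X. tri_shattered V E X} \<subseteq> card ` Pow V"
    by (auto simp: tri_shattered_def)
  then have "finite ({card X | X. tri_shattered V E X} \<union> {0})"
    using assms(1) finite_subset[of _ "card ` Pow V"] by blast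
  then show ?thesis unfolding tri_vc_dim_def
    using assms(2) by (intro Max_ge) auto
qed

definition tr :: "'a triedge set \<Rightarrow> 'a set \<Rightarrow> 'a set set" where
  "tr E Z = {Z \<inter> B | B R W. (B, R, W) \<in> E \<and> Z \<inter> R = {}}"

lemma tr_sub: "tr E Z \<subseteq> Pow Z"
  by (auto simp: tr_def)

lemma tr_bound:
  assumes "finite V" "tri_vc_dim V E \<le> d" "Z \<subseteq> V"
  shows "real (card (tr E Z)) \<le> 5 ^ d * (6/5) ^ card Z"
proof -
  have finZ: "finite Z" using assms finite_subset by blast
  have "card (tr E Z) \<le> card {A. A \<subseteq> Z \<and> shat (tr E Z) A}"
    by (rule pajor[OF finZ tr_sub])
  also have "\<dots> \<le> card {A. A \<subseteq> Z \<and> card A \<le> d}"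
  proof (rule card_mono)
    show "finite {A. A \<subseteq> Z \<and> card A \<le> d}" using finZ by auto
    show "{A. A \<subseteq> Z \<and> shat (tr E Z) A} \<subseteq> {A. A \<subseteq> Z \<and> card A \<le> d}"
    proof safe
      fix A assume A: "A \<subseteq> Z" "shat (tr E Z) A"
      have "tri_shattered V E A" unfolding tri_shattered_def
      proof (intro conjI allI impI)
        show "A \<subseteq> V" using A assms by blast
        fix Y assume "Y \<subseteq> A"
        then obtain S where S: "S \<in> tr E Z" "A \<inter> S = Y" using A(2) unfolding shat_def by blast
        then obtain B R W where e: "(B, R, W) \<in> E" "Z \<inter> R = {}" "S = Z \<inter> B"
          unfolding tr_def by blast
        have "A \<inter> B = Y" using S(2) e(3) A(1) by blast
        moreover have "A \<inter> (B \<union> R) = Y" using S(2) e(2,3) A(1) by blast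
        ultimately show "\<exists>(B, R, W)\<in>E. A \<inter> B = Y \<and> A \<inter> (B \<union> R) = Y"
          using e(1) by blast
      qed
      then show "card A \<le> d" using vc_le[OF assms(1)] assms(2) le_trans by blast
    qed
  qed
  finally have "real (card (tr E Z)) \<le> real (card {A. A \<subseteq> Z \<and> card A \<le> d})" by simp
  also have "\<dots> \<le> 5 ^ d * (6/5) ^ card Z" by (rule small_count[OF finZ])
  finally show ?thesis .
qed

lemma trI:
  assumes "(B, R, W) \<in> E" "Z \<inter> R = {}" "S = Z \<inter> B"
  shows "S \<in> tr E Z"
  using assms unfolding tr_def by blast

lemma lower_fiber:
  assumes hg1: "tri_hypergraph V E1" and hg2: "tri_hypergraph V E2"
    and sh: "tri_shattered V (tri_inter V E1 E2) X" and Y: "Y \<subseteq> X"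
  shows "2 ^ card Y \<le> card {Z \<in> Pow X. Y \<inter> Z \<in> tr E1 Z \<and> Y - Z \<in> tr E2 (X - Z)}"
proof -
  have XV: "X \<subseteq> V" using sh by (simp add: tri_shattered_def)
  have finV: "finite V" using hg1 by (simp add: tri_hypergraph_def)
  have finX: "finite X" using XV finV finite_subset by blast
  obtain e where e: "e \<in> tri_inter V E1 E2"
    "case e of (B, R, W) \<Rightarrow> X \<inter> B = Y \<and> X \<inter> (B \<union> R) = Y"
    using sh Y unfolding tri_shattered_def by blast
  then obtain e1 e2 where e12: "e1 \<in> E1" "e2 \<in> E2" "e = triedge_inter V e1 e2"
    unfolding tri_inter_def by blast
  obtain B1 R1 W1 where e1: "e1 = (B1, R1, W1)" by (cases e1) auto
  obtain B2 R2 W2 where e2: "e2 = (B2, R2, W2)" by (cases e2) auto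
  have d1: "B1 \<inter> R1 = {}" using hg1 e12(1) e1 unfolding tri_hypergraph_def by fastforce
  have d2: "B2 \<inter> R2 = {}" using hg2 e12(2) e2 unfolding tri_hypergraph_def by fastforce
  have h: "X \<inter> (B1 \<inter> B2) = Y \<and> X \<inter> ((B1 \<inter> B2) \<union> ((B1 \<union> R1) \<inter> (B2 \<union> R2) - B1 \<inter> B2)) = Y"
    using e(2) unfolding e12(3) e1 e2 triedge_inter_def Let_def by simp
  then have h1: "X \<inter> B1 \<inter> B2 = Y" and h2: "X \<inter> (B1 \<union> R1) \<inter> (B2 \<union> R2) = Y"
    by blast+
  define M where "M = X - (B1 \<union> R1)"
  have MY: "M \<inter> Y = {}" using h1 by (auto simp: M_def)
  have inj: "inj_on (\<lambda>Y'. M \<union> Y') (Pow Y)"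
    using MY by (auto simp: inj_on_def)
  have sub: "(\<lambda>Y'. M \<union> Y') ` Pow Y \<subseteq> {Z \<in> Pow X. Y \<inter> Z \<in> tr E1 Z \<and> Y - Z \<in> tr E2 (X - Z)}"
  proof (rule image_subsetI)
    fix Y' assume "Y' \<in> Pow Y"
    then have Y': "Y' \<subseteq> Y" by simp
    have A: "M \<union> Y' \<subseteq> X" using Y' Y by (auto simp: M_def)
    have B: "Y \<inter> (M \<union> Y') \<in> tr E1 (M \<union> Y')"
    proof (rule trI)
      show "(B1, R1, W1) \<in> E1" using e12(1) e1 by simp
      show "(M \<union> Y') \<inter> R1 = {}" using Y' h1 d1 by (auto simp: M_def)
      show "Y \<inter> (M \<union> Y') = (M \<union> Y') \<inter> B1" using Y' h1 MY by (auto simp: M_def)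
    qed
    have C: "Y - (M \<union> Y') \<in> tr E2 (X - (M \<union> Y'))"
    proof (rule trI)
      show "(B2, R2, W2) \<in> E2" using e12(2) e2 by simp
      show "(X - (M \<union> Y')) \<inter> R2 = {}" using Y' h1 h2 d2 by (auto simp: M_def)
      show "Y - (M \<union> Y') = (X - (M \<union> Y')) \<inter> B2" using Y' h1 h2 MY Y by (auto simp: M_def)
    qed
    show "M \<union> Y' \<in> {Z \<in> Pow X. Y \<inter> Z \<in> tr E1 Z \<and> Y - Z \<in> tr E2 (X - Z)}"
      using A B C by simp
  qed
  have "2 ^ card Y = card (Pow Y)" using finX Y finite_subset card_Pow by metis
  also have "\<dots> = card ((\<lambda>Y'. M \<union> Y') ` Pow Y)" using card_image[OF inj] by simp
  also have "\<dots> \<le> card {Z \<in> Pow X. Y \<inter> Z \<in> tr E1 Z \<and> Y - Z \<in> tr E2 (X - Z)}"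
    using sub finX by (intro card_mono) auto
  finally show ?thesis .
qed

lemma upper_fiber:
  assumes finV: "finite V" and v1: "tri_vc_dim V E1 \<le> d" and v2: "tri_vc_dim V E2 \<le> d"
    and XV: "X \<subseteq> V" and ZX: "Z \<subseteq> X"
  shows "real (card {Y \<in> Pow X. Y \<inter> Z \<in> tr E1 Z \<and> Y - Z \<in> tr E2 (X - Z)})
         \<le> 25 ^ d * (6/5) ^ card X"
proof -
  have finX: "finite X" using XV finV by (rule finite_subset)
  have finZ: "finite Z" using ZX finX by (rule finite_subset)
  have ft1: "finite (tr E1 Z)" by (rule finite_subset[OF tr_sub]) (simp add: finZ)
  have ft2: "finite (tr E2 (X - Z))" by (rule finite_subset[OF tr_sub]) (simp add: finX)
  have "card {Y \<in> Pow X. Y \<inter> Z \<in> tr E1 Z \<and> Y - Z \<in> tr E2 (X - Z)}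
        \<le> card (tr E1 Z \<times> tr E2 (X - Z))"
  proof (rule card_inj_on_le[where f = "\<lambda>Y. (Y \<inter> Z, Y - Z)"])
    show "inj_on (\<lambda>Y. (Y \<inter> Z, Y - Z)) {Y \<in> Pow X. Y \<inter> Z \<in> tr E1 Z \<and> Y - Z \<in> tr E2 (X - Z)}"
    proof (rule inj_onI)
      fix Y Y' assume "(Y \<inter> Z, Y - Z) = (Y' \<inter> Z, Y' - Z)"
      then have "Y \<inter> Z = Y' \<inter> Z" "Y - Z = Y' - Z" by (simp_all only: prod.inject)
      then show "Y = Y'" by (metis Int_Diff_Un)
    qed
    show "(\<lambda>Y. (Y \<inter> Z, Y - Z)) ` {Y \<in> Pow X. Y \<inter> Z \<in> tr E1 Z \<and> Y - Z \<in> tr E2 (X - Z)}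
          \<subseteq> tr E1 Z \<times> tr E2 (X - Z)" by blast
    show "finite (tr E1 Z \<times> tr E2 (X - Z))" using ft1 ft2 by simp
  qed
  also have "\<dots> = card (tr E1 Z) * card (tr E2 (X - Z))" by (rule card_cartesian_product)
  finally have "real (card {Y \<in> Pow X. Y \<inter> Z \<in> tr E1 Z \<and> Y - Z \<in> tr E2 (X - Z)})
      \<le> real (card (tr E1 Z)) * real (card (tr E2 (X - Z)))" by (simp only: of_nat_mult [symmetric] of_nat_le_iff)
  also have "\<dots> \<le> (5 ^ d * (6/5) ^ card Z) * (5 ^ d * (6/5) ^ card (X - Z))"
    using tr_bound[OF finV v1, of Z] tr_bound[OF finV v2, of "X - Z"] ZX XV
    by (intro mult_mono) auto
  also have "\<dots> = (5 ^ d * 5 ^ d) * (6/5) ^ (card Z + card (X - Z))"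
    by (simp add: power_add)
  also have "card Z + card (X - Z) = card X"
    using card_Diff_subset[OF finZ ZX] card_mono[OF finX ZX] by simp
  also have "(5::real) ^ d * 5 ^ d = 25 ^ d" by (simp flip: power_mult_distrib)
  finally show ?thesis .
qed

lemma card_filter_sum:
  "finite A \<Longrightarrow> card {x \<in> A. P x} = (\<Sum>x\<in>A. if P x then 1 else (0::nat))"
  by (simp add: sum.inter_filter[symmetric])

lemma main_bound:
  assumes hg1: "tri_hypergraph V E1" and hg2: "tri_hypergraph V E2"
    and v1: "tri_vc_dim V E1 \<le> d" and v2: "tri_vc_dim V E2 \<le> d"
    and sh: "tri_shattered V (tri_inter V E1 E2) X"
  shows "card X \<le> 15 * d"
proof -
  define Rl where "Rl = (\<lambda>Y Z. Y \<inter> Z \<in> tr E1 Z \<and> Y - Z \<in> tr E2 (X - Z))"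
  have XV: "X \<subseteq> V" using sh by (simp add: tri_shattered_def)
  have finV: "finite V" using hg1 by (simp add: tri_hypergraph_def)
  have finX: "finite X" using XV finV finite_subset by blast
  let ?n = "card X"
  have "(3::real) ^ ?n = (\<Sum>Y\<in>Pow X. 2 ^ card Y)"
    using sum_pow_card[OF finX, of 2] by simp
  also have "\<dots> \<le> (\<Sum>Y\<in>Pow X. real (card {Z \<in> Pow X. Rl Y Z}))"
  proof (rule sum_mono)
    fix Y assume "Y \<in> Pow X"
    then have "2 ^ card Y \<le> card {Z \<in> Pow X. Rl Y Z}"
      using lower_fiber[OF hg1 hg2 sh] by (simp add: Rl_def)
    then show "(2::real) ^ card Y \<le> real (card {Z \<in> Pow X. Rl Y Z})"
      by (metis of_nat_le_iff of_nat_numeral of_nat_power)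
  qed
  also have "(\<Sum>Y\<in>Pow X. card {Z \<in> Pow X. Rl Y Z}) = (\<Sum>Z\<in>Pow X. card {Y \<in> Pow X. Rl Y Z})"
  proof -
    have "(\<Sum>Y\<in>Pow X. card {Z \<in> Pow X. Rl Y Z}) = (\<Sum>Y\<in>Pow X. \<Sum>Z\<in>Pow X. if Rl Y Z then 1 else 0)"
      using finX by (intro sum.cong refl card_filter_sum) simp
    also have "\<dots> = (\<Sum>Z\<in>Pow X. \<Sum>Y\<in>Pow X. if Rl Y Z then 1 else 0)"
      by (rule sum.swap)
    also have "\<dots> = (\<Sum>Z\<in>Pow X. card {Y \<in> Pow X. Rl Y Z})"
      using finX by (intro sum.cong refl card_filter_sum[symmetric]) simp
    finally show ?thesis .
  qed
  then have "real (\<Sum>Y\<in>Pow X. card {Z \<in> Pow X. Rl Y Z}) = real (\<Sum>Z\<in>Pow X. card {Y \<in> Pow X. Rl Y Z})"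
    by (rule arg_cong)
  then have "(\<Sum>Y\<in>Pow X. real (card {Z \<in> Pow X. Rl Y Z})) = (\<Sum>Z\<in>Pow X. real (card {Y \<in> Pow X. Rl Y Z}))"
    by (simp only: of_nat_sum)
  also have "\<dots> \<le> (\<Sum>Z\<in>Pow X. 25 ^ d * (6/5) ^ ?n)"
  proof (rule sum_mono)
    fix Z assume "Z \<in> Pow X"
    then show "real (card {Y \<in> Pow X. Rl Y Z}) \<le> 25 ^ d * (6/5) ^ ?n"
      using upper_fiber[OF finV v1 v2 XV] by (simp add: Rl_def)
  qed
  also have "\<dots> = 2 ^ ?n * 25 ^ d * (6/5) ^ ?n"
    using finX by (simp add: card_Pow)
  finally have ineq: "(3::real) ^ ?n \<le> 2 ^ ?n * 25 ^ d * (6/5) ^ ?n" .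
  have e1: "(3::real) ^ ?n = (12/5) ^ ?n * (5/4) ^ ?n" by (simp flip: power_mult_distrib)
  have e2: "(2::real) ^ ?n * (6/5) ^ ?n = (12/5) ^ ?n" by (simp flip: power_mult_distrib)
  have e3: "(2::real) ^ ?n * 25 ^ d * (6/5) ^ ?n = (2 ^ ?n * (6/5) ^ ?n) * 25 ^ d"
    by (simp only: ac_simps)
  have "(12/5::real) ^ ?n * (5/4) ^ ?n \<le> (12/5) ^ ?n * 25 ^ d"
    using ineq unfolding e1 e3 e2 .
  then have key: "(5/4::real) ^ ?n \<le> 25 ^ d"
    by (rule mult_left_le_imp_le) simp
  show ?thesis
  proof (rule ccontr)
    assume "\<not> ?n \<le> 15 * d"
    then have "15 * d < ?n" by simp
    then have "(5/4::real) ^ (15 * d) < (5/4) ^ ?n" by (rule power_strict_increasing) simp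
    moreover have "(25::real) ^ d \<le> ((5/4) ^ 15) ^ d" by (rule power_mono) (simp_all add: power_divide)
    ultimately show False using key by (simp add: power_mult)
  qed
qed

theorem lemma4p5:
  shows "\<exists>C::real. C > 0 \<and>
    (\<forall>(V::nat set) E1 E2 (d::nat).
       tri_hypergraph V E1 \<and> tri_hypergraph V E2 \<and> d \<ge> 1 \<and>
       tri_vc_dim V E1 \<le> d \<and> tri_vc_dim V E2 \<le> d \<longrightarrow>
       real (tri_vc_dim V (tri_inter V E1 E2)) \<le> C * real d)"
proof (intro exI[of _ 15] conjI allI impI)
  fix V :: "nat set" and E1 E2 and d :: nat
  assume a: "tri_hypergraph V E1 \<and> tri_hypergraph V E2 \<and> d \<ge> 1 \<and>
       tri_vc_dim V E1 \<le> d \<and> tri_vc_dim V E2 \<le> d"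
  have finV: "finite V" using a by (simp add: tri_hypergraph_def)
  have "{card X | X. tri_shattered V (tri_inter V E1 E2) X} \<subseteq> card ` Pow V"
    by (auto simp: tri_shattered_def)
  then have fin: "finite ({card X | X. tri_shattered V (tri_inter V E1 E2) X} \<union> {0})"
    using finV finite_subset[of _ "card ` Pow V"] by blast
  have "tri_vc_dim V (tri_inter V E1 E2) \<le> 15 * d"
    unfolding tri_vc_dim_def
  proof (rule Max.boundedI[OF fin])
    show "{card X | X. tri_shattered V (tri_inter V E1 E2) X} \<union> {0} \<noteq> {}" by simp
    fix c assume "c \<in> {card X | X. tri_shattered V (tri_inter V E1 E2) X} \<union> {0}"
    then show "c \<le> 15 * d" using main_bound[of V E1 E2 d] a by auto
  qed
  then show "real (tri_vc_dim V (tri_inter V E1 E2)) \<le> 15 * real d"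
    by (metis of_nat_le_iff of_nat_mult of_nat_numeral)
qed simp

end
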